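(* Let $n=2$, $d\ge3$, and let $P_1,P_2$ be real quadratic forms on $\mathbb{R}^d$ such that for all linearly independent $\vec w_1,\dots,\vec w_{d-2}\in\mathbb{R}^d$, $\det[\nabla P_1(t);\nabla P_2(t);\vec w_1;\dots;\vec w_{d-2}]\not\equiv0$ as a polynomial in $t$. Let $V\subset\mathbb{R}^{d+2}$ be a nontrivial proper linear subspace. (1) If $1\le\dim V\le d-1$, then $\{t:\dim(\pi_t(V))<\dim V\}$ is contained in the zero set of a nonzero polynomial of degree at most $2$. (2) If $d\le\dim V\le d+1$, then $\{t:\dim(\pi_t(V))<\dim V-1\}$ is contained in the zero set of a nonzero polynomial of degree at most $2$.
   Context: For $t\in\mathbb{R}^d$, $V(t)\subset\mathbb{R}^{d+2}$ is the linear subspace spanned by $(e_j,\partial_jP_1(t),\partial_jP_2(t))$, $j=1,\dots,d$, and $\pi_t$ is the orthogonal projection onto $V(t)$. *)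

theory Defs
  imports "HOL-Analysis.Analysis"
begin

definition quadratic_form :: "(real^'d \<Rightarrow> real) \<Rightarrow> bool" where
  "quadratic_form P \<longleftrightarrow> (\<exists>A::real^'d^'d. \<forall>t. P t = t \<bullet> (A *v t))"

definition partial :: "(real^'d \<Rightarrow> real) \<Rightarrow> 'd \<Rightarrow> real^'d \<Rightarrow> real" where
  "partial P j t = deriv (\<lambda>s. P (t + s *\<^sub>R axis j 1)) 0"

definition grad :: "(real^'d \<Rightarrow> real) \<Rightarrow> real^'d \<Rightarrow> real^'d" where
  "grad P t = (\<chi> j. partial P j t)"

text \<open>R^(d+2) rendered as (real^'d) \<times> real \<times> real. Generators of V(t):
  (e_j, d_j P1(t), d_j P2(t)).\<close>
definition Vt :: "(real^'d \<Rightarrow> real) \<Rightarrow> (real^'d \<Rightarrow> real) \<Rightarrow> real^'d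
                   \<Rightarrow> ((real^'d) \<times> real \<times> real) set" where
  "Vt P1 P2 t = span (range (\<lambda>j. (axis j 1, partial P1 j t, partial P2 j t)))"

definition orth_proj :: "'a::euclidean_space set \<Rightarrow> 'a \<Rightarrow> 'a" where
  "orth_proj W x = (THE y. y \<in> W \<and> (\<forall>w\<in>W. (x - y) \<bullet> w = 0))"

definition pi_t :: "(real^'d \<Rightarrow> real) \<Rightarrow> (real^'d \<Rightarrow> real) \<Rightarrow> real^'d
                   \<Rightarrow> (real^'d) \<times> real \<times> real \<Rightarrow> (real^'d) \<times> real \<times> real" where
  "pi_t P1 P2 t = orth_proj (Vt P1 P2 t)"

text \<open>Polynomials of degree at most 2 on R^d: c + b.t + t^T Q t.
  Such a polynomial is the zero polynomial iff c = 0, b = 0 and Q + Q^T = 0.\<close>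
definition deg2_poly :: "real \<Rightarrow> real^'d \<Rightarrow> real^'d^'d \<Rightarrow> real^'d \<Rightarrow> real" where
  "deg2_poly c b Q t = c + b \<bullet> t + t \<bullet> (Q *v t)"

definition deg2_poly_nonzero :: "real \<Rightarrow> real^'d \<Rightarrow> real^'d^'d \<Rightarrow> bool" where
  "deg2_poly_nonzero c b Q \<longleftrightarrow> c \<noteq> 0 \<or> b \<noteq> 0 \<or> Q + transpose Q \<noteq> 0"

definition idx :: "'d::finite \<Rightarrow> nat" where
  "idx = (SOME f. bij_betw f (UNIV::'d set) {..<CARD('d)})"

definition row_matrix :: "(real^'d \<Rightarrow> real) \<Rightarrow> (real^'d \<Rightarrow> real) \<Rightarrow> (nat \<Rightarrow> real^'d)
                          \<Rightarrow> real^'d \<Rightarrow> real^'d^'d" where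
  "row_matrix P1 P2 w t = (\<chi> i. if idx i = 0 then grad P1 t
                                 else if idx i = 1 then grad P2 t
                                 else w (idx i - 2))"

end

theory Submission
  imports Defs
begin

lemma grad_qf:
  fixes A :: "real^'d::finite^'d"
  assumes "\<forall>t. P t = t \<bullet> (A *v t)"
  shows "grad P t = (A + transpose A) *v t"
proof -
  have "partial P j t = ((A + transpose A) *v t) $ j" for j
  proof -
    let ?e = "axis j (1::real) :: real^'d"
    have h1: "\<And>(c::real) i. (if i = j then 1 else 0) * c = (if i = j then c else 0)" by simp
    have h2: "\<And>(c::real) i. c * (if i = j then 1 else 0) = (if i = j then c else 0)" by simp
    have eq: "(\<lambda>s. P (t + s *\<^sub>R ?e)) = (\<lambda>s. t \<bullet> (A *v t) + s * (t \<bullet> (A *v ?e) + ?e \<bullet> (A *v t)) + s^2 * (?e \<bullet> (A *v ?e)))"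
      by (rule ext) (simp add: assms matrix_vector_right_distrib matrix_vector_mult_scaleR inner_add_left inner_add_right algebra_simps power2_eq_square)
    have "((\<lambda>s. t \<bullet> (A *v t) + s * (t \<bullet> (A *v ?e) + ?e \<bullet> (A *v t)) + s^2 * (?e \<bullet> (A *v ?e))) has_real_derivative (t \<bullet> (A *v ?e) + ?e \<bullet> (A *v t))) (at 0)"
      by (auto intro!: derivative_eq_intros)
    then have "partial P j t = t \<bullet> (A *v ?e) + ?e \<bullet> (A *v t)"
      unfolding partial_def eq by (rule DERIV_imp_deriv)
    also have "\<dots> = ((A + transpose A) *v t) $ j"
      by (simp add: matrix_vector_mult_def inner_vec_def axis_def transpose_def matrix_vector_mult_add_rdistrib h1 h2 sum.distrib algebra_simps)
    finally show ?thesis .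
  qed
  then show ?thesis by (simp add: grad_def vec_eq_iff)
qed


lemma orth_proj_ex1:
  fixes S :: "'a::euclidean_space set"
  shows "\<exists>!y. y \<in> span S \<and> (\<forall>w\<in>span S. (x - y) \<bullet> w = 0)"
proof -
  obtain y z where y: "y \<in> span S" and z: "\<And>w. w \<in> span S \<Longrightarrow> orthogonal z w" and xe: "x = y + z"
    using orthogonal_subspace_decomp_exists[of S x] by blast
  have "y \<in> span S \<and> (\<forall>w\<in>span S. (x - y) \<bullet> w = 0)"
    using y z xe by (simp add: orthogonal_def)
  moreover have "y1 = y2" if "y1 \<in> span S \<and> (\<forall>w\<in>span S. (x - y1) \<bullet> w = 0)"
      "y2 \<in> span S \<and> (\<forall>w\<in>span S. (x - y2) \<bullet> w = 0)" for y1 y2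
  proof -
    have d: "y1 - y2 \<in> span S" using that by (simp add: span_diff)
    have "(x - y2) \<bullet> (y1 - y2) - (x - y1) \<bullet> (y1 - y2) = 0" using that d by simp
    then have "(y1 - y2) \<bullet> (y1 - y2) = 0" by (simp add: inner_diff_left inner_diff_right inner_commute)
    then show ?thesis by simp
  qed
  ultimately show ?thesis by blast
qed

lemma orth_proj_props:
  fixes S :: "'a::euclidean_space set"
  shows "orth_proj (span S) x \<in> span S \<and> (\<forall>w\<in>span S. (x - orth_proj (span S) x) \<bullet> w = 0)"
  unfolding orth_proj_def by (rule theI'[OF orth_proj_ex1])

lemma orth_proj_unique:
  fixes S :: "'a::euclidean_space set"
  assumes "y \<in> span S" "\<forall>w\<in>span S. (x - y) \<bullet> w = 0"
  shows "orth_proj (span S) x = y"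
  using orth_proj_ex1[of S x] orth_proj_props[of S x] assms by blast

lemma orth_proj_linear:
  fixes S :: "'a::euclidean_space set"
  shows "linear (orth_proj (span S))"
proof (rule linearI)
  fix x y
  show "orth_proj (span S) (x + y) = orth_proj (span S) x + orth_proj (span S) y"
    apply (rule orth_proj_unique)
    using orth_proj_props[of S x] orth_proj_props[of S y]
    by (auto simp: span_add algebra_simps inner_diff_left inner_add_left)
next
  fix c x
  show "orth_proj (span S) (c *\<^sub>R x) = c *\<^sub>R orth_proj (span S) x"
    apply (rule orth_proj_unique)
    using orth_proj_props[of S x]
    by (auto simp: span_mul algebra_simps inner_diff_left span_scale)
qed

lemma orth_proj_zero_iff:
  fixes S :: "'a::euclidean_space set"
  shows "orth_proj (span S) x = 0 \<longleftrightarrow> (\<forall>w\<in>S. x \<bullet> w = 0)"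
proof
  assume "orth_proj (span S) x = 0"
  then show "\<forall>w\<in>S. x \<bullet> w = 0" using orth_proj_props[of S x] by (auto simp: span_base)
next
  assume a: "\<forall>w\<in>S. x \<bullet> w = 0"
  have "\<forall>w\<in>span S. x \<bullet> w = 0"
  proof
    fix w assume "w \<in> span S"
    then show "x \<bullet> w = 0"
      by (induct rule: span_induct) (auto simp: a subspace_def inner_add_right)
  qed
  then show "orth_proj (span S) x = 0" by (intro orth_proj_unique) (auto simp: span_zero)
qed

find_theorems "subspace ?S \<Longrightarrow> span ?S = ?S"

lemma rank_null:
  fixes f :: "'a::euclidean_space \<Rightarrow> 'b::euclidean_space"
  assumes lf: "linear f" and sV: "subspace V"
  shows "dim V \<le> dim (f ` V) + dim {v\<in>V. f v = 0}"
proof -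
  define K where "K = {v\<in>V. f v = 0}"
  define C where "C = {y\<in>V. \<forall>x\<in>K. orthogonal x y}"
  have sK: "subspace K" unfolding K_def
    using sV lf by (auto simp: subspace_def linear_add linear_cmul linear_0)
  have sC: "subspace C" unfolding C_def
    using sV by (auto simp: subspace_def orthogonal_clauses)
  have "dim C + dim K = dim V" unfolding C_def
    by (rule dim_subspace_orthogonal_to_vectors[OF sK sV]) (auto simp: K_def)
  moreover have "inj_on f (span C)"
  proof -
    have "inj_on f C"
    proof (rule inj_onI)
      fix a b assume ab: "a \<in> C" "b \<in> C" "f a = f b"
      have "a - b \<in> C" using sC ab by (simp add: subspace_diff)
      moreover have "a - b \<in> K" using ab lf unfolding K_def C_def
        by (auto simp: linear_diff subspace_diff[OF sV])
      ultimately have "orthogonal (a - b) (a - b)" unfolding C_def by auto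
      then show "a = b" by (simp add: orthogonal_def)
    qed
    then show ?thesis using sC by (metis span_eq_iff)
  qed
  then have "dim (f ` C) = dim C" using lf by (rule dim_image_eq[rotated])
  moreover have "dim (f ` C) \<le> dim (f ` V)" by (rule dim_subset) (auto simp: C_def)
  ultimately show ?thesis unfolding K_def by linarith
qed

lemma snd_full:
  fixes K :: "('a::euclidean_space \<times> 'b::euclidean_space) set"
  assumes sK: "subspace K" and inj: "inj_on snd K" and dK: "dim K \<ge> DIM('b)"
  shows "snd ` K = UNIV"
proof -
  have lin: "linear (snd :: 'a \<times> 'b \<Rightarrow> 'b)" by (rule linear_snd)
  have "dim (snd ` K) = dim K"
    using inj sK lin by (intro dim_image_eq) (auto simp: span_eq_iff[THEN iffD2, OF sK])
  moreover have "dim (snd ` K) \<le> DIM('b)" by (rule dim_subset_UNIV)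
  ultimately have "dim (snd ` K) = DIM('b)" using dK by linarith
  then have "span (snd ` K) = UNIV" by (simp add: dim_eq_full)
  moreover have "subspace (snd ` K)" using sK lin by (simp add: linear_subspace_image)
  ultimately show ?thesis using span_eq_iff[THEN iffD2] by metis
qed


lemma deg2_nz:
  assumes "deg2_poly c b Q t \<noteq> 0"
  shows "deg2_poly_nonzero c b Q"
proof (rule ccontr)
  assume "\<not> deg2_poly_nonzero c b Q"
  then have h: "c = 0" "b = 0" "Q + transpose Q = 0" by (auto simp: deg2_poly_nonzero_def)
  have "t \<bullet> (transpose Q *v t) = t \<bullet> (Q *v t)"
    by (metis dot_lmul_matrix inner_commute transpose_transpose vector_transpose_matrix)
  moreover have "t \<bullet> ((Q + transpose Q) *v t) = 0" using h by simp
  ultimately have "t \<bullet> (Q *v t) = 0" by (simp add: matrix_vector_mult_add_rdistrib inner_add_right)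
  with h assms show False by (simp add: deg2_poly_def)
qed

lemma deg2_affprod:
  "(c1 + b1 \<bullet> t) * (c2 + b2 \<bullet> t) =
    deg2_poly (c1*c2) (c1 *\<^sub>R b2 + c2 *\<^sub>R b1) (\<chi> i j. b1$i * b2$j) (t::real^'d::finite)"
proof -
  have "t \<bullet> ((\<chi> i j. b1$i * b2$j) *v t) = (b1 \<bullet> t) * (b2 \<bullet> t)"
    by (simp add: inner_vec_def matrix_vector_mult_def sum_distrib_left sum_distrib_right algebra_simps; subst sum.swap; simp add: algebra_simps)
  then show ?thesis by (simp add: deg2_poly_def algebra_simps inner_add_left)
qed

lemma deg2_diff:
  "deg2_poly c b Q t - deg2_poly c' b' Q' t = deg2_poly (c-c') (b-b') (Q-Q') t"
  by (simp add: deg2_poly_def inner_diff_left inner_diff_right matrix_vector_mult_diff_rdistrib)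

lemma det_zero_if:
  fixes A :: "real^'n::finite^'n"
  assumes "z \<noteq> 0" "\<And>i. A$i \<bullet> z = 0"
  shows "det A = 0"
proof (rule ccontr)
  assume "det A \<noteq> 0"
  then obtain B where B: "B ** A = mat 1" using invertible_det_nz invertible_def by blast
  have "A *v z = 0" using assms(2) by (simp add: vec_eq_iff matrix_vector_mult_def inner_vec_def mult.commute)
  then have "(B ** A) *v z = 0" by (simp add: matrix_vector_mul_assoc[symmetric])
  with B assms(1) show False by simp
qed

lemma ex_w:
  fixes x x' :: "real^'d::finite"
  shows "\<exists>w::nat \<Rightarrow> real^'d. inj_on w {..<CARD('d)-2} \<and> independent (w ` {..<CARD('d)-2})
           \<and> (\<forall>i. w i \<bullet> x = 0 \<and> w i \<bullet> x' = 0)"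
proof -
  define W where "W = {y\<in>UNIV. \<forall>v\<in>span{x,x'}. orthogonal v y}"
  have "dim W + dim (span {x,x'}) = dim (UNIV::(real^'d) set)"
    unfolding W_def by (rule dim_subspace_orthogonal_to_vectors) auto
  moreover have "dim (span {x,x'}) \<le> 2"
  proof -
    have "card {x,x'} \<le> 2" by (simp add: card_insert_if)
    moreover have "dim {x,x'} \<le> card {x,x'}" by (rule dim_le_card) (auto intro: span_base)
    ultimately show ?thesis by simp
  qed
  ultimately have dW: "dim W \<ge> CARD('d) - 2" by simp
  obtain B where B: "B \<subseteq> W" "independent B" "W \<subseteq> span B" "card B = dim W"
    using basis_exists[of W] by blast
  have fB: "finite B" using B(2) by (simp add: finiteI_independent)
  obtain f where f: "bij_betw f {..<card B} B" using ex_bij_betw_nat_finite[OF fB] by (auto simp: atLeast0LessThan)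
  define w where "w i = (if i < card B then f i else 0)" for i
  have sub: "{..<CARD('d)-2} \<subseteq> {..<card B}" using dW B(4) by auto
  have "inj_on w {..<CARD('d)-2}"
    using bij_betw_imp_inj_on[OF f] sub unfolding w_def inj_on_def by auto
  moreover have "w ` {..<CARD('d)-2} \<subseteq> B"
    using bij_betw_imp_surj_on[OF f] sub unfolding w_def by auto
  then have "independent (w ` {..<CARD('d)-2})" using B(2) by (rule independent_mono[rotated])
  moreover have "w i \<bullet> x = 0 \<and> w i \<bullet> x' = 0" for i
  proof (cases "i < card B")
    case True
    then have "f i \<in> W" using bij_betw_imp_surj_on[OF f] B(1) by auto
    then show ?thesis using True span_base[of x "{x,x'}"] span_base[of x' "{x,x'}"]
      by (auto simp: w_def W_def orthogonal_def inner_commute)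
  qed (simp add: w_def)
  ultimately show ?thesis by blast
qed
lemma pi_zero:
  "pi_t P1 P2 t v = 0 \<longleftrightarrow> fst v = -(fst (snd v) *\<^sub>R grad P1 t + snd (snd v) *\<^sub>R grad P2 t)"
proof -
  have "pi_t P1 P2 t v = 0 \<longleftrightarrow> (\<forall>j. fst v $ j + fst (snd v) * partial P1 j t + snd (snd v) * partial P2 j t = 0)"
    unfolding pi_t_def Vt_def orth_proj_zero_iff by (simp add: inner_prod_def inner_axis add.assoc)
  also have "\<dots> \<longleftrightarrow> (\<forall>j. fst v $ j = -(fst (snd v) * partial P1 j t + snd (snd v) * partial P2 j t))"
    by (simp only: eq_neg_iff_add_eq_0 add.assoc)
  also have "\<dots> \<longleftrightarrow> fst v = -(fst (snd v) *\<^sub>R grad P1 t + snd (snd v) *\<^sub>R grad P2 t)"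
    by (simp add: vec_eq_iff grad_def)
  finally show ?thesis .
qed

lemma key_orth:
  assumes "pi_t P1 P2 t k = 0" "k \<bullet> u = 0"
  shows "fst (snd k) * (fst (snd u) - grad P1 t \<bullet> fst u) + snd (snd k) * (snd (snd u) - grad P2 t \<bullet> fst u) = 0"
proof -
  have "fst k = -(fst (snd k) *\<^sub>R grad P1 t + snd (snd k) *\<^sub>R grad P2 t)" using assms(1) pi_zero by blast
  with assms(2) show ?thesis
    by (simp add: inner_prod_def inner_add_left inner_minus_left algebra_simps)
qed

lemma indep2:
  fixes x x' :: "'a::real_vector"
  assumes "independent {x,x'}" "x \<noteq> x'" "a *\<^sub>R x + b *\<^sub>R x' = 0"
  shows "a = 0 \<and> b = 0"
proof (rule ccontr)
  assume "\<not> (a = 0 \<and> b = 0)"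
  then consider "a \<noteq> 0" | "b \<noteq> 0" by blast
  then show False
  proof cases
    case 1
    note a = 1
    have "a *\<^sub>R x = (-b) *\<^sub>R x'" using assms(3) by (simp add: eq_neg_iff_add_eq_0)
    then have "inverse a *\<^sub>R (a *\<^sub>R x) = inverse a *\<^sub>R ((-b) *\<^sub>R x')" by simp
    then have "x = (-b/a) *\<^sub>R x'" using a by (simp add: divide_inverse mult.commute)
    then have "x \<in> span ({x,x'} - {x})" using assms(2) by (simp add: span_mul span_base span_neg)
    then show False using assms(1) dependent_def by blast
  next
    case 2
    note b = 2
    have "b *\<^sub>R x' = (-a) *\<^sub>R x" using assms(3) by (simp add: eq_neg_iff_add_eq_0 add.commute)
    then have "inverse b *\<^sub>R (b *\<^sub>R x') = inverse b *\<^sub>R ((-a) *\<^sub>R x)" by simp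
    then have "x' = (-a/b) *\<^sub>R x" using b by (simp add: divide_inverse mult.commute)
    then have "x' \<in> span ({x,x'} - {x'})" using assms(2) by (simp add: span_mul span_base span_neg insert_Diff_if)
    then show False using assms(1) dependent_def by blast
  qed
qed

lemma matvec_inner: "((B::real^'d::finite^'d) *v t) \<bullet> x = (transpose B *v x) \<bullet> t"
  by (metis dot_lmul_matrix inner_commute vector_transpose_matrix)

lemma nondeg_contra:
  fixes P1 P2 :: "real^'d::finite \<Rightarrow> real" and x x' :: "real^'d"
  assumes nondeg: "\<And>w::nat \<Rightarrow> real^'d.
         inj_on w {..<CARD('d) - 2} \<Longrightarrow> independent (w ` {..<CARD('d) - 2}) \<Longrightarrow>
         \<exists>t. det (row_matrix P1 P2 w t) \<noteq> 0"
    and zex: "\<And>t. \<exists>z. z \<noteq> 0 \<and> grad P1 t \<bullet> z = 0 \<and> grad P2 t \<bullet> z = 0 \<and>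
                 (\<forall>y. y \<bullet> x = 0 \<longrightarrow> y \<bullet> x' = 0 \<longrightarrow> y \<bullet> z = 0)"
  shows False
proof -
  obtain w :: "nat \<Rightarrow> real^'d" where w: "inj_on w {..<CARD('d)-2}" "independent (w ` {..<CARD('d)-2})"
      "\<forall>i. w i \<bullet> x = 0 \<and> w i \<bullet> x' = 0"
    using ex_w[of x x'] by blast
  obtain t where dt: "det (row_matrix P1 P2 w t) \<noteq> 0" using nondeg[OF w(1) w(2)] by blast
  obtain z where z: "z \<noteq> 0" "grad P1 t \<bullet> z = 0" "grad P2 t \<bullet> z = 0"
      "\<forall>y. y \<bullet> x = 0 \<longrightarrow> y \<bullet> x' = 0 \<longrightarrow> y \<bullet> z = 0"
    using zex[of t] by blast
  have "row_matrix P1 P2 w t $ i \<bullet> z = 0" for i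
    using z w(3) by (simp add: row_matrix_def)
  then have "det (row_matrix P1 P2 w t) = 0" using z(1) det_zero_if by blast
  with dt show False by simp
qed

theorem mainTheorem17:
  fixes P1 P2 :: "real^'d::finite \<Rightarrow> real"
    and V :: "((real^'d) \<times> real \<times> real) set"
  assumes d3: "CARD('d) \<ge> 3"
    and qf1: "quadratic_form P1" and qf2: "quadratic_form P2"
    and nondeg: "\<And>w::nat \<Rightarrow> real^'d.
         inj_on w {..<CARD('d) - 2} \<Longrightarrow> independent (w ` {..<CARD('d) - 2}) \<Longrightarrow>
         \<exists>t. det (row_matrix P1 P2 w t) \<noteq> 0"
    and subV: "subspace V" and ntV: "V \<noteq> {0}" and propV: "V \<noteq> UNIV"
  shows "(1 \<le> dim V \<and> dim V \<le> CARD('d) - 1 \<longrightarrow>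
            (\<exists>c b Q. deg2_poly_nonzero c b Q \<and>
               {t. dim (pi_t P1 P2 t ` V) < dim V} \<subseteq> {t. deg2_poly c b Q t = 0}))
       \<and> (CARD('d) \<le> dim V \<and> dim V \<le> CARD('d) + 1 \<longrightarrow>
            (\<exists>c b Q. deg2_poly_nonzero c b Q \<and>
               {t. dim (pi_t P1 P2 t ` V) < dim V - 1} \<subseteq> {t. deg2_poly c b Q t = 0}))"
proof -
  obtain A1 where A1: "\<forall>t. P1 t = t \<bullet> (A1 *v t)" using qf1 quadratic_form_def by blast
  obtain A2 where A2: "\<forall>t. P2 t = t \<bullet> (A2 *v t)" using qf2 quadratic_form_def by blast
  define B1 where "B1 = A1 + transpose A1"
  define B2 where "B2 = A2 + transpose A2"
  have G1x: "\<And>t y. grad P1 t \<bullet> y = (transpose B1 *v y) \<bullet> t"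
    using grad_qf[OF A1] B1_def matvec_inner by metis
  have G2x: "\<And>t y. grad P2 t \<bullet> y = (transpose B2 *v y) \<bullet> t"
    using grad_qf[OF A2] B2_def matvec_inner by metis
  have lin: "\<And>t. linear (pi_t P1 P2 t)" unfolding pi_t_def Vt_def by (rule orth_proj_linear)
  define U where "U = {y\<in>UNIV. \<forall>x\<in>V. orthogonal x y}"
  have sU: "subspace U" unfolding U_def
    by (auto simp: subspace_def orthogonal_clauses)
  have dimU: "dim U + dim V = CARD('d) + 2"
    using dim_subspace_orthogonal_to_vectors[OF subV subspace_UNIV] by (simp add: U_def dim_UNIV)
  have Uorth: "\<And>k u. k \<in> V \<Longrightarrow> u \<in> U \<Longrightarrow> k \<bullet> u = 0" by (auto simp: U_def orthogonal_def)
  define K where "K t = {v\<in>V. pi_t P1 P2 t v = 0}" for t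
  have rk: "\<And>t. dim V \<le> dim (pi_t P1 P2 t ` V) + dim (K t)"
    unfolding K_def by (rule rank_null[OF lin subV])
  have sK: "\<And>t. subspace (K t)" unfolding K_def
    using subV lin by (auto simp: subspace_def linear_add linear_cmul linear_0)
  have injK: "\<And>t. inj_on snd (K t)"
  proof (rule inj_onI)
    fix t a b assume "a \<in> K t" "b \<in> K t" "snd a = snd b"
    then show "a = b" unfolding K_def using pi_zero[of P1 P2 t a] pi_zero[of P1 P2 t b]
      by (auto intro: prod_eqI)
  qed
  have K_sub: "\<And>t. K t \<subseteq> V" unfolding K_def by auto
  have K_pi: "\<And>t k. k \<in> K t \<Longrightarrow> pi_t P1 P2 t k = 0" unfolding K_def by auto
  show ?thesis
  proof (intro conjI impI)
    assume c1: "1 \<le> dim V \<and> dim V \<le> CARD('d) - 1"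
    have dU: "dim U \<ge> 3" using dimU c1 d3 by linarith
    define D where "D u u' t = (fst (snd u) - grad P1 t \<bullet> fst u) * (snd (snd u') - grad P2 t \<bullet> fst u')
        - (snd (snd u) - grad P2 t \<bullet> fst u) * (fst (snd u') - grad P1 t \<bullet> fst u')" for u u' t
    have Dzero: "D u u' t = 0" if uU: "u \<in> U" "u' \<in> U" and bad: "dim (pi_t P1 P2 t ` V) < dim V" for u u' t
    proof -
      have "dim (K t) \<noteq> 0" using rk[of t] bad by linarith
      then obtain k where k: "k \<in> K t" "k \<noteq> 0" using dim_eq_0[of "K t"] by auto
      have ab: "snd k \<noteq> 0"
      proof
        assume "snd k = 0"
        moreover have "fst k = -(fst (snd k) *\<^sub>R grad P1 t + snd (snd k) *\<^sub>R grad P2 t)"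
          using pi_zero K_pi[OF k(1)] by blast
        ultimately have "k = 0" by (simp add: prod_eq_iff zero_prod_def)
        with k show False by simp
      qed
      define a where "a = fst (snd k)"
      define b where "b = snd (snd k)"
      define r1 where "r1 = fst (snd u) - grad P1 t \<bullet> fst u"
      define r2 where "r2 = snd (snd u) - grad P2 t \<bullet> fst u"
      define s1 where "s1 = fst (snd u') - grad P1 t \<bullet> fst u'"
      define s2 where "s2 = snd (snd u') - grad P2 t \<bullet> fst u'"
      have e1: "a * r1 + b * r2 = 0" unfolding a_def b_def r1_def r2_def
        using key_orth[OF K_pi[OF k(1)] Uorth[OF subsetD[OF K_sub k(1)] uU(1)]] .
      have e2: "a * s1 + b * s2 = 0" unfolding a_def b_def s1_def s2_def
        using key_orth[OF K_pi[OF k(1)] Uorth[OF subsetD[OF K_sub k(1)] uU(2)]] .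
      have Deq: "D u u' t = r1 * s2 - r2 * s1" unfolding D_def r1_def r2_def s1_def s2_def by simp
      have "a * (r1 * s2 - r2 * s1) = s2 * (a * r1 + b * r2) - r2 * (a * s1 + b * s2)" by algebra
      then have ha: "a * (r1 * s2 - r2 * s1) = 0" using e1 e2 by simp
      have "b * (r1 * s2 - r2 * s1) = r1 * (a * s1 + b * s2) - s1 * (a * r1 + b * r2)" by algebra
      then have hb: "b * (r1 * s2 - r2 * s1) = 0" using e1 e2 by simp
      have "a \<noteq> 0 \<or> b \<noteq> 0" using ab unfolding a_def b_def by (simp add: prod_eq_iff)
      then show ?thesis using ha hb Deq by auto
    qed
    have Dpoly: "\<exists>c b Q. \<forall>t. D u u' t = deg2_poly c b Q t" for u u'
    proof -
      define m1 where "m1 = - (transpose B1 *v fst u)"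
      define m2 where "m2 = - (transpose B2 *v fst u')"
      define m3 where "m3 = - (transpose B2 *v fst u)"
      define m4 where "m4 = - (transpose B1 *v fst u')"
      have "D u u' t = (fst (snd u) + m1 \<bullet> t) * (snd (snd u') + m2 \<bullet> t)
                     - (snd (snd u) + m3 \<bullet> t) * (fst (snd u') + m4 \<bullet> t)" for t
        unfolding D_def m1_def m2_def m3_def m4_def G1x G2x by (simp add: inner_minus_left)
      then show ?thesis unfolding deg2_affprod deg2_diff by blast
    qed
    have Dnz: "\<exists>u\<in>U. \<exists>u'\<in>U. \<exists>t. D u u' t \<noteq> 0"
    proof (cases "(0,1,0) \<in> U \<and> (0,0,1) \<in> U")
      case True
      then show ?thesis by (intro bexI[of _ "(0,1,0)"] bexI[of _ "(0,0,1)"]) (auto simp: D_def)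
    next
      case False
      define K1 where "K1 = {u\<in>U. fst u = 0}"
      have sK1: "subspace K1" unfolding K1_def using sU by (auto simp: subspace_def)
      have injK1: "inj_on snd K1" unfolding K1_def by (auto intro!: inj_onI prod_eqI)
      have dK1: "dim K1 \<le> 1"
      proof (rule ccontr)
        assume "\<not> dim K1 \<le> 1"
        then have "dim K1 \<ge> DIM(real \<times> real)" by simp
        then have full: "snd ` K1 = UNIV" by (rule snd_full[OF sK1 injK1])
        have "(1::real,0::real) \<in> snd ` K1" using full by simp
        then obtain k1 where k1: "k1 \<in> K1" "snd k1 = (1,0)" by (metis (no_types, lifting) imageE)
        then have "k1 = (0,1,0)" unfolding K1_def by (simp add: prod_eq_iff)
        then have "(0,1,0) \<in> U" using k1 unfolding K1_def by simp
        moreover have "(0::real,1::real) \<in> snd ` K1" using full by simp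
        then obtain k2 where k2: "k2 \<in> K1" "snd k2 = (0,1)" by (metis (no_types, lifting) imageE)
        then have "k2 = (0,0,1)" unfolding K1_def by (simp add: prod_eq_iff)
        then have "(0,0,1) \<in> U" using k2 unfolding K1_def by simp
        ultimately show False using False by blast
      qed
      have "dim U \<le> dim (fst ` U) + dim K1" unfolding K1_def by (rule rank_null[OF linear_fst sU])
      then have dfU: "dim (fst ` U) \<ge> 2" using dU dK1 by linarith
      obtain Bx where Bx: "Bx \<subseteq> fst ` U" "independent Bx" "fst ` U \<subseteq> span Bx" "card Bx = dim (fst ` U)"
        by (rule basis_exists)
      have "card Bx \<ge> 2" using Bx(4) dfU by linarith
      have fBx: "finite Bx" using Bx(2) by (simp add: finiteI_independent)
      obtain x where x: "x \<in> Bx" using \<open>card Bx \<ge> 2\<close> by (metis card.empty ex_in_conv not_numeral_le_zero)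
      have "card (Bx - {x}) \<ge> 1" using \<open>card Bx \<ge> 2\<close> x fBx by (simp add: card_Diff_singleton)
      then obtain x' where x': "x' \<in> Bx - {x}" by (metis card.empty ex_in_conv not_one_le_zero)
      have xx: "x \<in> Bx" "x' \<in> Bx" "x \<noteq> x'" using x x' by auto
      have ind: "independent {x,x'}" using xx Bx(2) by (meson empty_subsetI independent_mono insert_subset)
      have xnz: "x \<noteq> 0" using ind dependent_zero by blast
      obtain u where u: "u \<in> U" "fst u = x" using xx Bx(1) by blast
      obtain u' where u': "u' \<in> U" "fst u' = x'" using xx Bx(1) by blast
      have "\<exists>t. D u u' t \<noteq> 0"
      proof (rule ccontr)
        assume "\<not> (\<exists>t. D u u' t \<noteq> 0)"
        then have Dall: "\<And>t. D u u' t = 0" by blast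
        have neg1: "\<And>t y. grad P1 (-t) \<bullet> y = - (grad P1 t \<bullet> y)" using G1x by simp
        have neg2: "\<And>t y. grad P2 (-t) \<bullet> y = - (grad P2 t \<bullet> y)" using G2x by simp
        have zer1: "\<And>y. grad P1 0 \<bullet> y = 0" using G1x by simp
        have zer2: "\<And>y. grad P2 0 \<bullet> y = 0" using G2x by simp
        have q: "(grad P1 t \<bullet> x) * (grad P2 t \<bullet> x') - (grad P2 t \<bullet> x) * (grad P1 t \<bullet> x') = 0" for t
        proof -
          have "D u u' t + D u u' (-t) - 2 * D u u' 0 =
                2 * ((grad P1 t \<bullet> x) * (grad P2 t \<bullet> x') - (grad P2 t \<bullet> x) * (grad P1 t \<bullet> x'))"
            unfolding D_def neg1 neg2 zer1 zer2 u(2) u'(2) by (simp add: algebra_simps)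
          then show ?thesis using Dall by simp
        qed
        show False
        proof (rule nondeg_contra[OF nondeg, of x x'])
          fix t
          define p1 where "p1 = grad P1 t \<bullet> x"
          define p1' where "p1' = grad P1 t \<bullet> x'"
          define p2 where "p2 = grad P2 t \<bullet> x"
          define p2' where "p2' = grad P2 t \<bullet> x'"
          have qq: "p1 * p2' - p2 * p1' = 0" using q[of t] unfolding p1_def p1'_def p2_def p2'_def .
          have orth_lc: "\<And>y a b. y \<bullet> x = 0 \<longrightarrow> y \<bullet> x' = 0 \<longrightarrow> y \<bullet> (a *\<^sub>R x - b *\<^sub>R x') = 0"
            by (simp add: inner_diff_right)
          have nz: "\<And>a b. a \<noteq> 0 \<or> b \<noteq> 0 \<Longrightarrow> a *\<^sub>R x - b *\<^sub>R x' \<noteq> 0"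
          proof
            fix a b assume "a \<noteq> 0 \<or> b \<noteq> 0" "a *\<^sub>R x - b *\<^sub>R x' = 0"
            then have "a *\<^sub>R x + (-b) *\<^sub>R x' = 0" by simp
            from indep2[OF ind xx(3) this] \<open>a \<noteq> 0 \<or> b \<noteq> 0\<close> show False by simp
          qed
          show "\<exists>z. z \<noteq> 0 \<and> grad P1 t \<bullet> z = 0 \<and> grad P2 t \<bullet> z = 0 \<and>
                 (\<forall>y. y \<bullet> x = 0 \<longrightarrow> y \<bullet> x' = 0 \<longrightarrow> y \<bullet> z = 0)"
          proof (cases "p1' \<noteq> 0 \<or> p1 \<noteq> 0")
            case True
            show ?thesis
              apply (rule exI[of _ "p1' *\<^sub>R x - p1 *\<^sub>R x'"])
              using nz[OF True] orth_lc qq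
              by (simp add: inner_diff_right p1_def p1'_def p2_def p2'_def algebra_simps)
          next
            case F1: False
            show ?thesis
            proof (cases "p2' \<noteq> 0 \<or> p2 \<noteq> 0")
              case True
              show ?thesis
                apply (rule exI[of _ "p2' *\<^sub>R x - p2 *\<^sub>R x'"])
                using nz[OF True] orth_lc F1
                by (simp add: inner_diff_right p1_def p1'_def p2_def p2'_def algebra_simps)
            next
              case False
              show ?thesis
                apply (rule exI[of _ x])
                using xnz F1 False by (simp add: p1_def p2_def)
            qed
          qed
        qed
      qed
      then show ?thesis using u u' by blast
    qed
    then obtain u u' t0 where uu: "u \<in> U" "u' \<in> U" "D u u' t0 \<noteq> 0" by blast
    obtain c b Q where cbQ: "\<forall>t. D u u' t = deg2_poly c b Q t" using Dpoly by blast
    show "\<exists>c b Q. deg2_poly_nonzero c b Q \<and>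
               {t. dim (pi_t P1 P2 t ` V) < dim V} \<subseteq> {t. deg2_poly c b Q t = 0}"
    proof (intro exI conjI)
      show "deg2_poly_nonzero c b Q" using uu(3) cbQ deg2_nz by metis
      show "{t. dim (pi_t P1 P2 t ` V) < dim V} \<subseteq> {t. deg2_poly c b Q t = 0}"
        using Dzero[OF uu(1) uu(2)] cbQ by auto
    qed
  next
    assume c2: "CARD('d) \<le> dim V \<and> dim V \<le> CARD('d) + 1"
    have "dim U \<noteq> 0" using dimU c2 by linarith
    then obtain u where u: "u \<in> U" "u \<noteq> 0" using dim_eq_0[of U] by auto
    define x where "x = fst u"
    define \<alpha> where "\<alpha> = fst (snd u)"
    define \<beta> where "\<beta> = snd (snd u)"
    have bad1: "grad P1 t \<bullet> x = \<alpha> \<and> grad P2 t \<bullet> x = \<beta>" if bad: "dim (pi_t P1 P2 t ` V) < dim V - 1" for t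
    proof -
      have "dim (K t) \<ge> DIM(real \<times> real)" using rk[of t] bad by simp
      then have full: "snd ` K t = UNIV" by (rule snd_full[OF sK injK])
      have "(1::real,0::real) \<in> snd ` K t" "(0::real,1::real) \<in> snd ` K t" using full by simp_all
      then obtain k1 k2 where k1: "k1 \<in> K t" "snd k1 = (1,0)" and k2: "k2 \<in> K t" "snd k2 = (0,1)"
        by (metis (no_types, lifting) imageE)
      have "1 * (\<alpha> - grad P1 t \<bullet> x) + 0 * (\<beta> - grad P2 t \<bullet> x) = 0"
        using key_orth[OF K_pi[OF k1(1)] Uorth[OF subsetD[OF K_sub k1(1)] u(1)]] k1(2)
        unfolding x_def \<alpha>_def \<beta>_def by simp
      moreover have "0 * (\<alpha> - grad P1 t \<bullet> x) + 1 * (\<beta> - grad P2 t \<bullet> x) = 0"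
        using key_orth[OF K_pi[OF k2(1)] Uorth[OF subsetD[OF K_sub k2(1)] u(1)]] k2(2)
        unfolding x_def \<alpha>_def \<beta>_def by simp
      ultimately show ?thesis by simp
    qed
    show "\<exists>c b Q. deg2_poly_nonzero c b Q \<and>
               {t. dim (pi_t P1 P2 t ` V) < dim V - 1} \<subseteq> {t. deg2_poly c b Q t = 0}"
    proof (cases "\<alpha> \<noteq> 0 \<or> transpose B1 *v x \<noteq> 0")
      case True
      show ?thesis
      proof (intro exI conjI)
        show "deg2_poly_nonzero (-\<alpha>) (transpose B1 *v x) 0" using True unfolding deg2_poly_nonzero_def by (metis neg_equal_0_iff_equal)
        show "{t. dim (pi_t P1 P2 t ` V) < dim V - 1} \<subseteq> {t. deg2_poly (-\<alpha>) (transpose B1 *v x) 0 t = 0}"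
          using bad1 G1x by (auto simp: deg2_poly_def)
      qed
    next
      case F1: False
      show ?thesis
      proof (cases "\<beta> \<noteq> 0 \<or> transpose B2 *v x \<noteq> 0")
        case True
        show ?thesis
        proof (intro exI conjI)
          show "deg2_poly_nonzero (-\<beta>) (transpose B2 *v x) 0" using True unfolding deg2_poly_nonzero_def by (metis neg_equal_0_iff_equal)
          show "{t. dim (pi_t P1 P2 t ` V) < dim V - 1} \<subseteq> {t. deg2_poly (-\<beta>) (transpose B2 *v x) 0 t = 0}"
            using bad1 G2x by (auto simp: deg2_poly_def)
        qed
      next
        case False
        have xnz: "x \<noteq> 0"
        proof
          assume "x = 0"
          then have "u = 0" using F1 False unfolding x_def \<alpha>_def \<beta>_def by (simp add: prod_eq_iff)
          with u show False by simp
        qed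
        show ?thesis
        proof (rule FalseE, rule nondeg_contra[OF nondeg, of x x])
          fix t
          show "\<exists>z. z \<noteq> 0 \<and> grad P1 t \<bullet> z = 0 \<and> grad P2 t \<bullet> z = 0 \<and>
                 (\<forall>y. y \<bullet> x = 0 \<longrightarrow> y \<bullet> x = 0 \<longrightarrow> y \<bullet> z = 0)"
            using xnz F1 False G1x G2x by auto
        qed
      qed
    qed
  qed
qed

end
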